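(* Let $\mathrm T=(T,\mathrm D)$ be a random labeled plane tree and let $\mathrm T^{\mathrm{sym}}$ be its symmetrization. Then for any constants $k,K,M$, \begin{align*} &\mathbb P\Big(\sup_{|i-j|\le k}|\ell_{\mathrm T}(\theta_T(i))-\ell_{\mathrm T}(\theta_T(j))|>M\Big)\\ &\le\mathbb P\Big(\sup_{|i-j|\le k}\mathrm{dist}(\theta_T(i),\theta_T(j))>K\Big)+\mathbb P\Big(\sup_{v,w\in V(\mathrm T^{\mathrm{sym}}):\,\mathrm{dist}(v,w)\le K}|\ell_{\mathrm T^{\mathrm{sym}}}(v)-\ell_{\mathrm T^{\mathrm{sym}}}(w)|>M\Big), \end{align*} where $i,j$ range over $\{0,\dots,2|T|-2\}$.
   Context: Plane trees are rooted and encoded by Ulam–Harris words (possibly with vertex types). A labeled plane tree $(t,\mathrm d)$ has real displacements on edges; $\ell_{\mathrm t}(v)$ is the sum of displacements on the path from the root to $v$, and $\mathrm{dist}$ is the graph distance in the tree. The contour exploration $\theta_t:\{0,\dots,2|t|-2\}\to V(t)$ is defined by $\theta_t(0)=\emptyset$ and $\theta_t(i)$ equal to the lexicographically first child of $\theta_t(i-1)$ not among $\theta_t(0),\dots,\theta_t(i-1)$, or the parent of $\theta_t(i-1)$ if there is no such child. For $\sigma=(\sigma_v,v\in V(t))$ with $\sigma_v$ a permutation of the children of $v$, $\sigma(t,\mathrm d)$ reorders the children of each $v$ according to $\sigma_v$ with displacements following their edges; the symmetrization of a random labeled tree $(T,\mathrm D)$ is $\sigma(T,\mathrm D)$ with $\sigma$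 chosen uniformly among all such vectors, conditionally on $(T,\mathrm D)$. *)

theory Defs
  imports "HOL-Probability.Probability" "HOL-Combinatorics.Permutations"
begin

text \<open>Words are lists of natural numbers (children indexed from 0).
  A plane tree is a finite, nonempty, prefix-closed set of words such that
  if u@[j] is a vertex then so is u@[i] for every i \<le> j.\<close>

definition plane_tree :: "nat list set \<Rightarrow> bool" where
  "plane_tree t \<longleftrightarrow> finite t \<and> [] \<in> t
     \<and> (\<forall>u v. u @ v \<in> t \<longrightarrow> u \<in> t)
     \<and> (\<forall>u i j. u @ [j] \<in> t \<and> i \<le> j \<longrightarrow> u @ [i] \<in> t)"

definition nkids :: "nat list set \<Rightarrow> nat list \<Rightarrow> nat" where
  "nkids t u = card {i. u @ [i] \<in> t}"

text \<open>A displacement function d assigns to every non-root vertex v the displacement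
  on the edge from its parent to v.  The label of v is the sum of the displacements
  along the path from the root to v.\<close>

definition label :: "nat list set \<Rightarrow> (nat list \<Rightarrow> real) \<Rightarrow> nat list \<Rightarrow> real" where
  "label t d v = (\<Sum>k\<in>{1..length v}. d (take k v))"

definition tree_adj :: "nat list \<Rightarrow> nat list \<Rightarrow> bool" where
  "tree_adj v w \<longleftrightarrow> (\<exists>i. w = v @ [i]) \<or> (\<exists>i. v = w @ [i])"

definition tree_path :: "nat list set \<Rightarrow> nat list list \<Rightarrow> bool" where
  "tree_path t p \<longleftrightarrow> p \<noteq> [] \<and> set p \<subseteq> t
     \<and> (\<forall>k. Suc k < length p \<longrightarrow> tree_adj (p ! k) (p ! Suc k))"

definition tree_dist :: "nat list set \<Rightarrow> nat list \<Rightarrow> nat list \<Rightarrow> nat" where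
  "tree_dist t v w = (LEAST n. \<exists>p. tree_path t p \<and> hd p = v \<and> last p = w \<and> length p = Suc n)"

text \<open>visited t i = [theta(0), ..., theta(i)].\<close>

primrec visited :: "nat list set \<Rightarrow> nat \<Rightarrow> nat list list" where
  "visited t 0 = [[]]"
| "visited t (Suc i) =
     (let vs = visited t i; v = last vs;
          C = {j. v @ [j] \<in> t \<and> v @ [j] \<notin> set vs}
      in vs @ [if C = {} then butlast v else v @ [Min C]])"

definition contour :: "nat list set \<Rightarrow> nat \<Rightarrow> nat list" where
  "contour t i = last (visited t i)"

text \<open>Vectors of permutations: sigma v permutes the children indices of v (and is the
  identity for v outside the tree, so the set is finite).\<close>

definition sym_vecs :: "nat list set \<Rightarrow> (nat list \<Rightarrow> nat \<Rightarrow> nat) set" where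
  "sym_vecs t = {\<sigma>. (\<forall>v\<in>t. \<sigma> v permutes {..<nkids t v}) \<and> (\<forall>v. v \<notin> t \<longrightarrow> \<sigma> v = id)}"

text \<open>The vertex map induced by sigma: the child v@[i] is sent to child number sigma v i.\<close>

definition sym_map :: "(nat list \<Rightarrow> nat \<Rightarrow> nat) \<Rightarrow> nat list \<Rightarrow> nat list" where
  "sym_map \<sigma> w = map (\<lambda>k. \<sigma> (take k w) (w ! k)) [0..<length w]"

definition sym_tree :: "(nat list \<Rightarrow> nat \<Rightarrow> nat) \<Rightarrow> nat list set \<Rightarrow> nat list set" where
  "sym_tree \<sigma> t = sym_map \<sigma> ` t"

text \<open>Displacements follow their edges.\<close>

definition sym_disp :: "(nat list \<Rightarrow> nat \<Rightarrow> nat) \<Rightarrow> nat list set \<Rightarrow> (nat list \<Rightarrow> real)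
    \<Rightarrow> nat list \<Rightarrow> real" where
  "sym_disp \<sigma> t d w' =
     (if \<exists>w\<in>t. sym_map \<sigma> w = w' then d (THE w. w \<in> t \<and> sym_map \<sigma> w = w') else 0)"

text \<open>Probability, conditionally on the labeled tree (t,d), that the symmetrization
  sigma(t,d), sigma uniform in sym_vecs t, satisfies P.\<close>

definition sym_cond_prob ::
    "(nat list set \<Rightarrow> (nat list \<Rightarrow> real) \<Rightarrow> bool) \<Rightarrow> nat list set \<Rightarrow> (nat list \<Rightarrow> real) \<Rightarrow> real" where
  "sym_cond_prob P t d =
     real (card {\<sigma>\<in>sym_vecs t. P (sym_tree \<sigma> t) (sym_disp \<sigma> t d)}) / real (card (sym_vecs t))"

end

theory Submission
  imports Defs
begin


lemma pt_finite_kids: "plane_tree t \<Longrightarrow> finite {j. v @ [j] \<in> t}"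
proof -
  assume "plane_tree t"
  then have "finite t" by (simp add: plane_tree_def)
  then have "finite ((\<lambda>j. v @ [j]) -` t)" by (rule finite_vimageI) (simp add: inj_def)
  then show ?thesis by (simp add: vimage_def)
qed

lemma visited_ne: "visited t i \<noteq> []"
  by (induction i) (auto simp: Let_def)

lemma visited_in: assumes "plane_tree t" shows "set (visited t i) \<subseteq> t"
proof (induction i)
  case 0 then show ?case using assms by (simp add: plane_tree_def)
next
  case (Suc i)
  define vs where "vs = visited t i"
  define v where "v = last vs"
  define C where "C = {j. v @ [j] \<in> t \<and> v @ [j] \<notin> set vs}"
  have vt: "v \<in> t" using Suc visited_ne[of t i] unfolding v_def vs_def by auto
  have fC: "finite C" using pt_finite_kids[OF assms, of v] unfolding C_def
    by (rule finite_subset[rotated]) auto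
  have "(if C = {} then butlast v else v @ [Min C]) \<in> t"
  proof (cases "C = {}")
    case True
    then show ?thesis using vt assms unfolding plane_tree_def
      by (metis append_butlast_last_id butlast.simps(1))
  next
    case False
    then have "Min C \<in> C" using fC Min_in by blast
    then show ?thesis using False unfolding C_def by auto
  qed
  then show ?case using Suc unfolding vs_def v_def C_def by (simp add: Let_def)
qed

lemma contour_in: "plane_tree t \<Longrightarrow> contour t i \<in> t"
  using visited_in visited_ne unfolding contour_def by (metis last_in_set subsetD)



lemma sym_map_len[simp]: "length (sym_map \<sigma> w) = length w"
  by (simp add: sym_map_def)

lemma sym_map_snoc: "sym_map \<sigma> (w @ [i]) = sym_map \<sigma> w @ [\<sigma> w i]"
  unfolding sym_map_def by (auto simp: nth_append intro!: nth_equalityI)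

lemma sym_map_Nil[simp]: "sym_map \<sigma> [] = []"
  by (simp add: sym_map_def)

lemma sym_map_take: "take k (sym_map \<sigma> w) = sym_map \<sigma> (take k w)"
  unfolding sym_map_def by (auto simp: min_def intro!: nth_equalityI)

lemma sym_map_inj:
  assumes "\<And>v. inj (\<sigma> v)"
  shows "inj (sym_map \<sigma>)"
proof -
  have "\<forall>w'. sym_map \<sigma> w = sym_map \<sigma> w' \<longrightarrow> w = w'" for w
  proof (induction w rule: rev_induct)
    case Nil then show ?case by (metis length_0_conv sym_map_len)
  next
    case (snoc i u)
    show ?case
    proof (intro allI impI)
      fix w' assume eq: "sym_map \<sigma> (u @ [i]) = sym_map \<sigma> w'"
      then have "w' \<noteq> []" by (metis Nil_is_append_conv list.distinct(1) sym_map_Nil sym_map_snoc)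
      then obtain u' i' where w': "w' = u' @ [i']" by (metis rev_exhaust)
      from eq have "sym_map \<sigma> u = sym_map \<sigma> u'" "\<sigma> u i = \<sigma> u' i'"
        unfolding w' sym_map_snoc by auto
      then have "u = u'" "\<sigma> u i = \<sigma> u i'" using snoc by auto
      then show "u @ [i] = w'" using assms[of u] w' by (auto dest: injD)
    qed
  qed
  then show ?thesis by (auto intro: injI)
qed

lemma sym_map_snoc_inv:
  assumes "\<And>v. inj (\<sigma> v)" and "sym_map \<sigma> w = sym_map \<sigma> u @ [j]"
  shows "\<exists>i. w = u @ [i]"
proof -
  have "w \<noteq> []" using assms(2) by (metis Nil_is_append_conv list.distinct(1) sym_map_Nil)
  then obtain u' i where w: "w = u' @ [i]" by (metis rev_exhaust)
  then have "sym_map \<sigma> u' = sym_map \<sigma> u" using assms(2) by (simp add: sym_map_snoc)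
  then have "u' = u" using sym_map_inj[of \<sigma>] assms(1) by (auto dest: injD)
  then show ?thesis using w by blast
qed

lemma sym_map_adj:
  assumes "\<And>v. inj (\<sigma> v)"
  shows "tree_adj (sym_map \<sigma> a) (sym_map \<sigma> b) \<longleftrightarrow> tree_adj a b"
  unfolding tree_adj_def using sym_map_snoc_inv[OF assms] by (auto simp: sym_map_snoc)

lemma dist_transfer:
  assumes inj: "inj f" and adj: "\<And>a b. tree_adj (f a) (f b) \<longleftrightarrow> tree_adj a b"
    and vt: "v \<in> t" and wt: "w \<in> t"
  shows "tree_dist (f ` t) (f v) (f w) = tree_dist t v w"
proof -
  have "(\<exists>p. tree_path (f ` t) p \<and> hd p = f v \<and> last p = f w \<and> length p = Suc n)
      \<longleftrightarrow> (\<exists>p. tree_path t p \<and> hd p = v \<and> last p = w \<and> length p = Suc n)" for n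
  proof
    assume "\<exists>p. tree_path (f ` t) p \<and> hd p = f v \<and> last p = f w \<and> length p = Suc n"
    then obtain p where p: "tree_path (f ` t) p" "hd p = f v" "last p = f w" "length p = Suc n" by blast
    define q where "q = map (inv f) p"
    have "\<forall>x\<in>set p. f (inv f x) = x" using p(1) by (auto simp: tree_path_def intro: f_inv_into_f)
    then have pq: "p = map f q" unfolding q_def by (simp add: map_idI)
    have "tree_path t q"
      using p(1) unfolding tree_path_def pq using adj inj
      by (auto simp: inj_image_mem_iff image_subset_iff)
    moreover have "hd q = v" "last q = w" using p pq inj
      by (auto simp: hd_map last_map tree_path_def dest: injD)
    ultimately show "\<exists>p. tree_path t p \<and> hd p = v \<and> last p = w \<and> length p = Suc n"
      using p(4) pq by auto
  next
    assume "\<exists>p. tree_path t p \<and> hd p = v \<and> last p = w \<and> length p = Suc n"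
    then obtain p where p: "tree_path t p" "hd p = v" "last p = w" "length p = Suc n" by blast
    have "tree_path (f ` t) (map f p)" using p(1) adj unfolding tree_path_def by auto
    then show "\<exists>p. tree_path (f ` t) p \<and> hd p = f v \<and> last p = f w \<and> length p = Suc n"
      using p by (intro exI[of _ "map f p"]) (auto simp: hd_map last_map tree_path_def)
  qed
  then show ?thesis unfolding tree_dist_def by simp
qed

lemma label_transfer:
  assumes inj: "inj (sym_map \<sigma>)" and pt: "plane_tree t" and vt: "v \<in> t"
  shows "label t' (sym_disp \<sigma> t d) (sym_map \<sigma> v) = label t d v"
  unfolding label_def
proof (rule sum.cong)
  fix k assume "k \<in> {1..length v}"
  have tk: "take k v \<in> t" using pt vt unfolding plane_tree_def by (metis append_take_drop_id)
  have "(THE w. w \<in> t \<and> sym_map \<sigma> w = sym_map \<sigma> (take k v)) = take k v"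
    using tk inj by (auto dest: injD)
  then show "sym_disp \<sigma> t d (take k (sym_map \<sigma> v)) = d (take k v)"
    unfolding sym_disp_def sym_map_take using tk by auto
qed simp

lemma sym_vecs_inj: "\<sigma> \<in> sym_vecs t \<Longrightarrow> inj (\<sigma> v)"
  unfolding sym_vecs_def by (cases "v \<in> t") (auto dest: permutes_inj)

lemma sym_vecs_ne: "(\<lambda>v. id) \<in> sym_vecs t"
  unfolding sym_vecs_def by (auto intro: permutes_id)

lemma sym_vecs_finite: assumes "finite t" shows "finite (sym_vecs t)"
proof -
  have "(\<lambda>\<sigma>. restrict \<sigma> t) ` sym_vecs t \<subseteq> PiE t (\<lambda>v. {p. p permutes {..<nkids t v}})"
    unfolding sym_vecs_def by auto
  moreover have "finite (PiE t (\<lambda>v. {p. p permutes {..<nkids t v}}))"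
    using assms by (intro finite_PiE) (auto intro: finite_permutations)
  ultimately have "finite ((\<lambda>\<sigma>. restrict \<sigma> t) ` sym_vecs t)" by (rule finite_subset)
  moreover have "inj_on (\<lambda>\<sigma>. restrict \<sigma> t) (sym_vecs t)"
  proof (rule inj_onI)
    fix a b assume "a \<in> sym_vecs t" "b \<in> sym_vecs t" "restrict a t = restrict b t"
    then show "a = b" unfolding sym_vecs_def
    proof (intro ext)
      fix v x
      assume ab: "a \<in> {\<sigma>. (\<forall>v\<in>t. \<sigma> v permutes {..<nkids t v}) \<and> (\<forall>v. v \<notin> t \<longrightarrow> \<sigma> v = id)}"
        "b \<in> {\<sigma>. (\<forall>v\<in>t. \<sigma> v permutes {..<nkids t v}) \<and> (\<forall>v. v \<notin> t \<longrightarrow> \<sigma> v = id)}"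
        and r: "restrict a t = restrict b t"
      show "a v x = b v x"
      proof (cases "v \<in> t")
        case True
        then show ?thesis using fun_cong[OF r, of v] by simp
      next
        case False
        then show ?thesis using ab by simp
      qed
    qed
  qed
  ultimately show ?thesis by (rule finite_imageD)
qed


lemma symprob:
  assumes pt: "plane_tree t"
  shows "sym_cond_prob
          (\<lambda>t d. \<exists>v\<in>t. \<exists>w\<in>t. real (tree_dist t v w) \<le> K \<and> \<bar>label t d v - label t d w\<bar> > M) t d
       = (if \<exists>v\<in>t. \<exists>w\<in>t. real (tree_dist t v w) \<le> K \<and> \<bar>label t d v - label t d w\<bar> > M then 1 else 0)"
    (is "sym_cond_prob ?Q t d = _")
proof -
  have eq: "?Q (sym_tree \<sigma> t) (sym_disp \<sigma> t d) \<longleftrightarrow> ?Q t d" if s: "\<sigma> \<in> sym_vecs t" for \<sigma>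
  proof -
    have ij: "\<And>v. inj (\<sigma> v)" using sym_vecs_inj[OF s] .
    have inj: "inj (sym_map \<sigma>)" using sym_map_inj[of \<sigma>] ij by blast
    have adj: "\<And>a b. tree_adj (sym_map \<sigma> a) (sym_map \<sigma> b) \<longleftrightarrow> tree_adj a b"
      using sym_map_adj[of \<sigma>] ij by blast
    have d: "\<And>v w. v \<in> t \<Longrightarrow> w \<in> t \<Longrightarrow> tree_dist (sym_tree \<sigma> t) (sym_map \<sigma> v) (sym_map \<sigma> w) = tree_dist t v w"
      unfolding sym_tree_def using dist_transfer[OF inj adj] by blast
    have l: "\<And>v. v \<in> t \<Longrightarrow> label (sym_tree \<sigma> t) (sym_disp \<sigma> t d) (sym_map \<sigma> v) = label t d v"
      using label_transfer[OF inj pt] by blast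
    show ?thesis unfolding sym_tree_def[of \<sigma> t] using d l by (auto simp: sym_tree_def)
  qed
  have fin: "finite (sym_vecs t)" using sym_vecs_finite pt plane_tree_def by blast
  have ne: "card (sym_vecs t) \<noteq> 0" using fin sym_vecs_ne[of t] by auto
  define S where "S = {\<sigma>\<in>sym_vecs t. ?Q (sym_tree \<sigma> t) (sym_disp \<sigma> t d)}"
  have sc: "sym_cond_prob ?Q t d = real (card S) / real (card (sym_vecs t))"
    unfolding sym_cond_prob_def S_def by simp
  show ?thesis
  proof (cases "?Q t d")
    case True
    then have "S = sym_vecs t" unfolding S_def using eq[THEN iffD2] by blast
    then show ?thesis using True ne sc by simp
  next
    case False
    then have "S = {}" unfolding S_def using eq[THEN iffD1] by blast
    then show ?thesis using False sc by simp
  qed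
qed



theorem lemma3p2:
  fixes \<Omega> :: "'w measure"
    and T :: "'w \<Rightarrow> nat list set"
    and D :: "'w \<Rightarrow> nat list \<Rightarrow> real"
    and k K M :: real
  assumes "prob_space \<Omega>"
    and "T \<in> \<Omega> \<rightarrow>\<^sub>M count_space {t. plane_tree t}"
    and "\<And>v. (\<lambda>\<omega>. D \<omega> v) \<in> borel_measurable \<Omega>"
  shows "measure \<Omega> {\<omega>\<in>space \<Omega>. \<exists>i\<in>{0..2 * card (T \<omega>) - 2}. \<exists>j\<in>{0..2 * card (T \<omega>) - 2}.
             \<bar>real i - real j\<bar> \<le> k \<and>
             \<bar>label (T \<omega>) (D \<omega>) (contour (T \<omega>) i) - label (T \<omega>) (D \<omega>) (contour (T \<omega>) j)\<bar> > M}
     \<le> measure \<Omega> {\<omega>\<in>space \<Omega>. \<exists>i\<in>{0..2 * card (T \<omega>) - 2}. \<exists>j\<in>{0..2 * card (T \<omega>) - 2}.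
             \<bar>real i - real j\<bar> \<le> k \<and>
             real (tree_dist (T \<omega>) (contour (T \<omega>) i) (contour (T \<omega>) j)) > K}
       + (\<integral>\<omega>. sym_cond_prob
              (\<lambda>t d. \<exists>v\<in>t. \<exists>w\<in>t. real (tree_dist t v w) \<le> K \<and> \<bar>label t d v - label t d w\<bar> > M)
              (T \<omega>) (D \<omega>) \<partial>\<Omega>)"
proof -
  interpret P: prob_space \<Omega> by fact
  define PT where "PT = {t. plane_tree t}"
  define Q where "Q = (\<lambda>t d. \<exists>v\<in>t. \<exists>w\<in>t. real (tree_dist t v w) \<le> K \<and> \<bar>label t d v - label t d w\<bar> > M)"
  define RB where "RB = (\<lambda>t. \<exists>i\<in>{0..2 * card t - 2}. \<exists>j\<in>{0..2 * card t - 2}.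
             \<bar>real i - real j\<bar> \<le> k \<and> real (tree_dist t (contour t i) (contour t j)) > K)"
  define A where "A = {\<omega>\<in>space \<Omega>. \<exists>i\<in>{0..2 * card (T \<omega>) - 2}. \<exists>j\<in>{0..2 * card (T \<omega>) - 2}.
             \<bar>real i - real j\<bar> \<le> k \<and>
             \<bar>label (T \<omega>) (D \<omega>) (contour (T \<omega>) i) - label (T \<omega>) (D \<omega>) (contour (T \<omega>) j)\<bar> > M}"
  define B where "B = {\<omega>\<in>space \<Omega>. RB (T \<omega>)}"
  define C where "C = {\<omega>\<in>space \<Omega>. Q (T \<omega>) (D \<omega>)}"
  have Tsp: "\<And>\<omega>. \<omega> \<in> space \<Omega> \<Longrightarrow> plane_tree (T \<omega>)"
    using measurable_space[OF assms(2)] by auto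
  have TPT: "T \<in> \<Omega> \<rightarrow>\<^sub>M count_space PT" using assms(2) unfolding PT_def .
  have cPT: "countable PT"
    by (rule countable_subset[OF _ countable_Collect_finite]) (auto simp: PT_def plane_tree_def)
  have "Measurable.pred \<Omega> (\<lambda>\<omega>. RB (T \<omega>))"
    by (rule measurable_compose_countable'[where f="\<lambda>t \<omega>. RB t", OF _ TPT cPT]) simp
  then have Bs: "B \<in> sets \<Omega>" unfolding B_def Measurable.pred_def .
  have labm: "(\<lambda>\<omega>. label t (D \<omega>) v) \<in> borel_measurable \<Omega>" for t v
    unfolding label_def using assms(3) by (intro borel_measurable_sum) auto
  have Qm: "Measurable.pred \<Omega> (\<lambda>\<omega>. Q t (D \<omega>))" if "t \<in> PT" for t
  proof -
    have ft: "finite t" using that by (simp add: PT_def plane_tree_def)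
    show ?thesis unfolding Q_def
      using ft labm by (intro pred_intros_finite) measurable
  qed
  have "Measurable.pred \<Omega> (\<lambda>\<omega>. Q (T \<omega>) (D \<omega>))"
    by (rule measurable_compose_countable'[where f="\<lambda>t \<omega>. Q t (D \<omega>)", OF _ TPT cPT]) (use Qm in \<open>simp add: Measurable.pred_def\<close>)
  then have Cs: "C \<in> sets \<Omega>" unfolding C_def Measurable.pred_def .
  have AB: "A \<subseteq> B \<union> C"
  proof
    fix \<omega> assume "\<omega> \<in> A"
    then obtain i j where ij: "i\<in>{0..2 * card (T \<omega>) - 2}" "j\<in>{0..2 * card (T \<omega>) - 2}"
      "\<bar>real i - real j\<bar> \<le> k"
      "\<bar>label (T \<omega>) (D \<omega>) (contour (T \<omega>) i) - label (T \<omega>) (D \<omega>) (contour (T \<omega>) j)\<bar> > M"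
      and sp: "\<omega> \<in> space \<Omega>" unfolding A_def by blast
    show "\<omega> \<in> B \<union> C"
    proof (cases "\<omega> \<in> B")
      case False
      then have "real (tree_dist (T \<omega>) (contour (T \<omega>) i) (contour (T \<omega>) j)) \<le> K"
        using ij sp unfolding B_def RB_def by force
      then have "Q (T \<omega>) (D \<omega>)" unfolding Q_def
        using ij(4) contour_in[OF Tsp[OF sp]] by blast
      then show ?thesis using sp unfolding C_def by blast
    qed simp
  qed
  have "measure \<Omega> A \<le> measure \<Omega> (B \<union> C)"
    using AB Bs Cs by (intro P.finite_measure_mono) auto
  also have "\<dots> \<le> measure \<Omega> B + measure \<Omega> C" using Bs Cs by (rule measure_Un_le)
  also have "measure \<Omega> C = (\<integral>\<omega>. indicator C \<omega> \<partial>\<Omega>)"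
    using Cs by (simp add: Int_absorb2 sets.sets_into_space)
  also have "\<dots> = (\<integral>\<omega>. sym_cond_prob Q (T \<omega>) (D \<omega>) \<partial>\<Omega>)"
  proof (rule Bochner_Integration.integral_cong[OF refl])
    fix \<omega> assume sp: "\<omega> \<in> space \<Omega>"
    show "indicator C \<omega> = sym_cond_prob Q (T \<omega>) (D \<omega>)"
      using symprob[OF Tsp[OF sp], of K M "D \<omega>"] sp unfolding Q_def C_def by (simp add: indicator_def)
  qed
  finally show ?thesis unfolding A_def B_def RB_def Q_def .
qed


end
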